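(* Let $X$ be finite, $\mathcal{X}_{lim}\subseteq\mathcal{X}^2$, and $p$ an observed random joint choice rule on $\mathcal{X}_{lim}$. The following are equivalent: (1) $p$ has a consumption dependent random utility representation on $\mathcal{X}_{lim}$; (2) there exists $q$ satisfying conditions (a)–(e) below; (3) there exists $q$ satisfying conditions (a), (b), (c), (d') and (e') below. Here $q$ is indexed by all $(x,y,A,B)$ with $A,B\in\mathcal{X}$, $(x,y)\in A\times B$, and: (a) $\sum_{A\subseteq A'\subseteq X}\sum_{B\subseteq B'\subseteq X}q(x,y,A',B')=p(x,y,A,B)$ for all $A\times B\in\mathcal{X}_{lim}$, $(x,y)\in A\times B$; (b) $\sum_{y\in B}q(x,y,A,B)=\sum_{z\in X\setminus B}q(x,z,A,B\cup\{z\})$ for all $A\in\mathcal{X}$, nonempty $B\subsetneq X$, $x\in A$; (c) $q(x,y,A,B)\ge0$ for all indices; (d) $\sum_{x\in A}\sum_{y\in X}q(x,y,A,X)=\sum_{z\in X\setminus A}\sum_{y\in X}q(z,y,A\cup\{z\},X)$ for all $A\in\mathcal{X}$, $A\neq X$; (e) $\sum_{x\in X}\sum_{y\in X}q(x,y,X,X)=1$; (d') the equation in (d) for those $A\in\mathcal{X}$, $A\ne X$, such that there is no $B\in\mathcal{X}$ with $A\times B\in\mathcal{X}_{lim}$; (e') the equation in (e), imposed only if there is no $B\in\mathcal{X}$ with $X\times B\in\mathcal{X}_{lim}$.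
   Context: $X$ is finite, $\mathcal{X}$ the nonempty subsets of $X$, $\mathcal{L}(X)$ the linear orders on $X$, $N(x,A)=\{\succ: x\succ y\ \forall y\in A\setminus\{x\}\}$. An observed random joint choice rule on $\mathcal{X}_{lim}$ assigns to each $A\times B\in\mathcal{X}_{lim}$ and $(x,y)\in A\times B$ a number $p(x,y,A,B)\ge0$ with $\sum_{x\in A}\sum_{y\in B}p(x,y,A,B)=1$. It has a consumption dependent random utility representation if there exist $\nu\in\Delta(\mathcal{L}(X))$ and a transition function $t:X\times\mathcal{L}(X)\to\Delta(\mathcal{L}(X))$ (with $t_{\succ'}(x,\succ)$ the probability of $\succ'$) such that $p(x,y,A,B)=\sum_{\succ\in N(x,A)}\sum_{\succ'\in N(y,B)}\nu(\succ)t_{\succ'}(x,\succ)$ for all $A\times B\in\mathcal{X}_{lim}$, $(x,y)\in A\times B$. *)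

theory Defs
  imports Complex_Main
begin

text \<open>The ground set X is the universe of a finite type 'a.
  Linear orders on X are strict linear orders (relations) on UNIV; (x,y) in r means x is preferred to y.\<close>

definition linorders :: "('a \<times> 'a) set set" where
  "linorders = {r. strict_linear_order r}"

definition Nset :: "'a \<Rightarrow> 'a set \<Rightarrow> ('a \<times> 'a) set set" where
  "Nset x A = {r \<in> linorders. \<forall>y \<in> A - {x}. (x, y) \<in> r}"

definition nesets :: "'a set set" where
  "nesets = {A. A \<noteq> {}}"

definition rjcr :: "('a set \<times> 'a set) set \<Rightarrow> ('a \<Rightarrow> 'a \<Rightarrow> 'a set \<Rightarrow> 'a set \<Rightarrow> real) \<Rightarrow> bool" where
  "rjcr Xlim p \<longleftrightarrow>
     (\<forall>(A, B) \<in> Xlim. (\<forall>x \<in> A. \<forall>y \<in> B. p x y A B \<ge> 0) \<and>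
                      (\<Sum>x\<in>A. \<Sum>y\<in>B. p x y A B) = 1)"

definition is_dist :: "(('a \<times> 'a) set \<Rightarrow> real) \<Rightarrow> bool" where
  "is_dist \<mu> \<longleftrightarrow> (\<forall>r. \<mu> r \<ge> 0) \<and> (\<forall>r. r \<notin> linorders \<longrightarrow> \<mu> r = 0)
                  \<and> (\<Sum>r\<in>linorders. \<mu> r) = 1"

text \<open>Consumption dependent random utility representation. t x r r' is the
  probability of r' given consumption x and preference r.\<close>
definition cdru_rep :: "('a::finite set \<times> 'a set) set \<Rightarrow> ('a \<Rightarrow> 'a \<Rightarrow> 'a set \<Rightarrow> 'a set \<Rightarrow> real) \<Rightarrow> bool" where
  "cdru_rep Xlim p \<longleftrightarrow>
     (\<exists>(\<nu> :: ('a \<times> 'a) set \<Rightarrow> real) (t :: 'a \<Rightarrow> ('a \<times> 'a) set \<Rightarrow> ('a \<times> 'a) set \<Rightarrow> real).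
        is_dist \<nu> \<and> (\<forall>x. \<forall>r \<in> linorders. is_dist (t x r)) \<and>
        (\<forall>(A, B) \<in> Xlim. \<forall>x \<in> A. \<forall>y \<in> B.
           p x y A B = (\<Sum>r\<in>Nset x A. \<Sum>r'\<in>Nset y B. \<nu> r * t x r r')))"

definition cond_a :: "('a::finite set \<times> 'a set) set \<Rightarrow> ('a \<Rightarrow> 'a \<Rightarrow> 'a set \<Rightarrow> 'a set \<Rightarrow> real)
    \<Rightarrow> ('a \<Rightarrow> 'a \<Rightarrow> 'a set \<Rightarrow> 'a set \<Rightarrow> real) \<Rightarrow> bool" where
  "cond_a Xlim p q \<longleftrightarrow>
     (\<forall>(A, B) \<in> Xlim. \<forall>x \<in> A. \<forall>y \<in> B.
        (\<Sum>A'\<in>{A'. A \<subseteq> A'}. \<Sum>B'\<in>{B'. B \<subseteq> B'}. q x y A' B') = p x y A B)"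

definition cond_b :: "('a::finite \<Rightarrow> 'a \<Rightarrow> 'a set \<Rightarrow> 'a set \<Rightarrow> real) \<Rightarrow> bool" where
  "cond_b q \<longleftrightarrow>
     (\<forall>A \<in> nesets. \<forall>B. B \<noteq> {} \<and> B \<noteq> UNIV \<longrightarrow> (\<forall>x \<in> A.
        (\<Sum>y\<in>B. q x y A B) = (\<Sum>z\<in>UNIV - B. q x z A (insert z B))))"

definition cond_c :: "('a \<Rightarrow> 'a \<Rightarrow> 'a set \<Rightarrow> 'a set \<Rightarrow> real) \<Rightarrow> bool" where
  "cond_c q \<longleftrightarrow> (\<forall>A \<in> nesets. \<forall>B \<in> nesets. \<forall>x \<in> A. \<forall>y \<in> B. q x y A B \<ge> 0)"

definition eq_d :: "('a::finite \<Rightarrow> 'a \<Rightarrow> 'a set \<Rightarrow> 'a set \<Rightarrow> real) \<Rightarrow> 'a set \<Rightarrow> bool" where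
  "eq_d q A \<longleftrightarrow>
     (\<Sum>x\<in>A. \<Sum>y\<in>UNIV. q x y A UNIV) = (\<Sum>z\<in>UNIV - A. \<Sum>y\<in>UNIV. q z y (insert z A) UNIV)"

definition eq_e :: "('a::finite \<Rightarrow> 'a \<Rightarrow> 'a set \<Rightarrow> 'a set \<Rightarrow> real) \<Rightarrow> bool" where
  "eq_e q \<longleftrightarrow> (\<Sum>x\<in>UNIV. \<Sum>y\<in>UNIV. q x y UNIV UNIV) = 1"

definition cond_d :: "('a::finite \<Rightarrow> 'a \<Rightarrow> 'a set \<Rightarrow> 'a set \<Rightarrow> real) \<Rightarrow> bool" where
  "cond_d q \<longleftrightarrow> (\<forall>A \<in> nesets. A \<noteq> UNIV \<longrightarrow> eq_d q A)"

definition cond_d' :: "('a::finite set \<times> 'a set) set \<Rightarrow> ('a \<Rightarrow> 'a \<Rightarrow> 'a set \<Rightarrow> 'a set \<Rightarrow> real) \<Rightarrow> bool" where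
  "cond_d' Xlim q \<longleftrightarrow>
     (\<forall>A \<in> nesets. A \<noteq> UNIV \<and> \<not> (\<exists>B \<in> nesets. (A, B) \<in> Xlim) \<longrightarrow> eq_d q A)"

definition cond_e' :: "('a::finite set \<times> 'a set) set \<Rightarrow> ('a \<Rightarrow> 'a \<Rightarrow> 'a set \<Rightarrow> 'a set \<Rightarrow> real) \<Rightarrow> bool" where
  "cond_e' Xlim q \<longleftrightarrow> (\<not> (\<exists>B \<in> nesets. (UNIV, B) \<in> Xlim) \<longrightarrow> eq_e q)"

end

theory Submission
  imports Defs "HOL-Combinatorics.Multiset_Permutations"
begin

definition up :: "'a \<Rightarrow> ('a \<times> 'a) set \<Rightarrow> 'a set" where
  "up y r = {w. (w, y) \<in> r}"

lemma lin_trans: "r \<in> linorders \<Longrightarrow> (a,b) \<in> r \<Longrightarrow> (b,c) \<in> r \<Longrightarrow> (a,c) \<in> r"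
  unfolding linorders_def strict_linear_order_on_def trans_def by blast
lemma lin_irrefl: "r \<in> linorders \<Longrightarrow> (a,a) \<notin> r"
  unfolding linorders_def strict_linear_order_on_def irrefl_def by blast
lemma lin_total: "r \<in> linorders \<Longrightarrow> a \<noteq> b \<Longrightarrow> (a,b) \<in> r \<or> (b,a) \<in> r"
  unfolding linorders_def strict_linear_order_on_def total_on_def by blast
lemma lin_asym: "r \<in> linorders \<Longrightarrow> (a,b) \<in> r \<Longrightarrow> (b,a) \<notin> r"
  by (meson lin_trans lin_irrefl)

lemma lin_max: assumes "r \<in> linorders" "finite B" "B \<noteq> {}"
  shows "\<exists>y\<in>B. \<forall>b\<in>B - {y}. (y,b) \<in> r"
  using assms(2,3)
proof (induction B rule: finite_ne_induct)
  case (singleton x) then show ?case by auto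
next
  case (insert x F)
  then obtain y where y: "y \<in> F" "\<forall>b\<in>F - {y}. (y,b) \<in> r" by blast
  show ?case
  proof (cases "(x,y) \<in> r")
    case True
    then show ?thesis using y insert.hyps lin_trans[OF assms(1)] by (auto intro!: bexI[of _ x])
  next
    case False
    then have "(y,x) \<in> r" using lin_total[OF assms(1), of x y] insert.hyps y by auto
    then show ?thesis using y by (auto intro!: bexI[of _ y])
  qed
qed

lemma lin_min: assumes "r \<in> linorders" "finite B" "B \<noteq> {}"
  shows "\<exists>y\<in>B. \<forall>b\<in>B - {y}. (b,y) \<in> r"
  using assms(2,3)
proof (induction B rule: finite_ne_induct)
  case (singleton x) then show ?case by auto
next
  case (insert x F)
  then obtain y where y: "y \<in> F" "\<forall>b\<in>F - {y}. (b,y) \<in> r" by blast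
  show ?case
  proof (cases "(y,x) \<in> r")
    case True
    then show ?thesis using y insert.hyps lin_trans[OF assms(1)] by (auto intro!: bexI[of _ x])
  next
    case False
    then have "(x,y) \<in> r" using lin_total[OF assms(1), of x y] insert.hyps y by auto
    then show ?thesis using y by (auto intro!: bexI[of _ y])
  qed
qed

lemma K1a:
  fixes r :: "('a::finite \<times> 'a) set"
  assumes r: "r \<in> linorders" and B: "B \<noteq> {}"
  shows "(\<Sum>y\<in>B. if up y r = UNIV - B then 1 else 0 :: real)
       = (if \<forall>a\<in>UNIV - B. \<forall>b\<in>B. (a,b) \<in> r then 1 else 0)"
proof (cases "\<forall>a\<in>UNIV - B. \<forall>b\<in>B. (a,b) \<in> r")
  case True
  obtain y where y: "y \<in> B" "\<forall>b\<in>B - {y}. (y,b) \<in> r" using lin_max[OF r finite B] by blast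
  have "\<forall>y'\<in>B. (up y' r = UNIV - B) = (y' = y)"
  proof
    fix y' assume y': "y' \<in> B"
    show "(up y' r = UNIV - B) = (y' = y)"
    proof
      assume h: "up y' r = UNIV - B"
      show "y' = y"
      proof (rule ccontr)
        assume "y' \<noteq> y"
        then have "(y,y') \<in> r" using y y' by auto
        then have "y \<in> up y' r" by (simp add: up_def)
        then show False using h y by auto
      qed
    next
      assume "y' = y"
      have "w \<in> up y r \<longleftrightarrow> w \<in> UNIV - B" for w
      proof (cases "w \<in> B")
        case True
        then have "(w,y) \<notin> r" using y lin_asym[OF r, of y w] lin_irrefl[OF r, of y] by (cases "w = y") auto
        then show ?thesis using True by (simp add: up_def)
      next
        case False
        then show ?thesis using \<open>\<forall>a\<in>UNIV - B. \<forall>b\<in>B. (a,b) \<in> r\<close> y by (simp add: up_def)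
      qed
      then show "up y' r = UNIV - B" using \<open>y' = y\<close> by blast
    qed
  qed
  then have "(\<Sum>y\<in>B. if up y r = UNIV - B then 1 else 0 :: real) = (\<Sum>y'\<in>B. if y' = y then 1 else 0)"
    by (intro sum.cong) auto
  also have "\<dots> = 1" using y by simp
  finally show ?thesis using True by simp
next
  case False
  have "\<forall>y\<in>B. up y r \<noteq> UNIV - B"
  proof (intro ballI notI)
    fix y assume y: "y \<in> B" and h: "up y r = UNIV - B"
    have "\<forall>a\<in>UNIV - B. \<forall>b\<in>B. (a,b) \<in> r"
    proof (intro ballI)
      fix a b assume a: "a \<in> UNIV - B" and b: "b \<in> B"
      have ay: "(a,y) \<in> r" using a h by (auto simp: up_def)
      show "(a,b) \<in> r"
      proof (cases "b = y")
        case True then show ?thesis using ay by simp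
      next
        case False
        have "b \<notin> up y r" using h b by auto
        then have "(y,b) \<in> r" using lin_total[OF r False] by (auto simp: up_def)
        then show ?thesis using ay lin_trans[OF r] by blast
      qed
    qed
    then show False using False by simp
  qed
  then show ?thesis using False by simp
qed

lemma K1b:
  fixes r :: "('a::finite \<times> 'a) set"
  assumes r: "r \<in> linorders" and B: "B \<noteq> UNIV"
  shows "(\<Sum>z\<in>UNIV - B. if up z r = UNIV - insert z B then 1 else 0 :: real)
       = (if \<forall>a\<in>UNIV - B. \<forall>b\<in>B. (a,b) \<in> r then 1 else 0)"
proof (cases "\<forall>a\<in>UNIV - B. \<forall>b\<in>B. (a,b) \<in> r")
  case True
  obtain z where z: "z \<in> UNIV - B" "\<forall>b\<in>(UNIV - B) - {z}. (b,z) \<in> r"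
    using lin_min[OF r, of "UNIV - B"] B by auto
  have "\<forall>z'\<in>UNIV - B. (up z' r = UNIV - insert z' B) = (z' = z)"
  proof
    fix z' assume z': "z' \<in> UNIV - B"
    show "(up z' r = UNIV - insert z' B) = (z' = z)"
    proof
      assume h: "up z' r = UNIV - insert z' B"
      show "z' = z"
      proof (rule ccontr)
        assume ne: "z' \<noteq> z"
        then have "(z',z) \<in> r" using z z' by auto
        moreover have "z \<in> up z' r" using h z ne by auto
        ultimately show False using lin_asym[OF r] by (auto simp: up_def)
      qed
    next
      assume "z' = z"
      have "w \<in> up z r \<longleftrightarrow> w \<in> UNIV - insert z B" for w
      proof (cases "w \<in> B \<or> w = z")
        case True
        then have "(w,z) \<notin> r" using z lin_asym[OF r, of z w] lin_irrefl[OF r, of z] \<open>\<forall>a\<in>UNIV - B. \<forall>b\<in>B. (a,b) \<in> r\<close> by auto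
        then show ?thesis using True by (auto simp: up_def)
      next
        case False
        then show ?thesis using z by (simp add: up_def)
      qed
      then show "up z' r = UNIV - insert z' B" using \<open>z' = z\<close> by blast
    qed
  qed
  then have "(\<Sum>z\<in>UNIV - B. if up z r = UNIV - insert z B then 1 else 0 :: real)
       = (\<Sum>z'\<in>UNIV - B. if z' = z then 1 else 0)"
    by (intro sum.cong) auto
  also have "\<dots> = 1" using z by simp
  finally show ?thesis using True by simp
next
  case False
  have "\<forall>z\<in>UNIV - B. up z r \<noteq> UNIV - insert z B"
  proof (intro ballI notI)
    fix z assume z: "z \<in> UNIV - B" and h: "up z r = UNIV - insert z B"
    have "\<forall>a\<in>UNIV - B. \<forall>b\<in>B. (a,b) \<in> r"
    proof (intro ballI)
      fix a b assume a: "a \<in> UNIV - B" and b: "b \<in> B"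
      have "b \<notin> up z r" using h b by auto
      moreover have "b \<noteq> z" using b z by auto
      ultimately have zb: "(z,b) \<in> r" using lin_total[OF r] by (auto simp: up_def)
      show "(a,b) \<in> r"
      proof (cases "a = z")
        case True then show ?thesis using zb by simp
      next
        case False
        then have "(a,z) \<in> r" using a h by (auto simp: up_def)
        then show ?thesis using zb lin_trans[OF r] by blast
      qed
    qed
    then show False using False by simp
  qed
  then show ?thesis using False by simp
qed

lemma K1:
  fixes r :: "('a::finite \<times> 'a) set"
  assumes "r \<in> linorders" "B \<noteq> {}" "B \<noteq> UNIV"
  shows "(\<Sum>y\<in>B. if up y r = UNIV - B then 1 else 0 :: real)
       = (\<Sum>z\<in>UNIV - B. if up z r = UNIV - insert z B then 1 else 0 :: real)"
  using K1a[OF assms(1,2)] K1b[OF assms(1,3)] by simp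

lemma K1top:
  fixes r :: "('a::finite \<times> 'a) set"
  assumes "r \<in> linorders"
  shows "(\<Sum>y\<in>UNIV. if up y r = {} then 1 else 0 :: real) = 1"
  using K1a[OF assms, of UNIV] by simp

lemma K2:
  fixes r :: "('a::finite \<times> 'a) set"
  assumes r: "r \<in> linorders" and x: "x \<in> A"
  shows "(\<Sum>A'\<in>{A'. A \<subseteq> A'}. if up x r = UNIV - A' then 1 else 0 :: real)
       = (if r \<in> Nset x A then 1 else 0)"
proof -
  have "(\<Sum>A'\<in>{A'. A \<subseteq> A'}. if up x r = UNIV - A' then 1 else 0 :: real)
      = (\<Sum>A'\<in>{A'. A \<subseteq> A'}. if A' = UNIV - up x r then 1 else 0)"
    by (intro sum.cong) auto
  also have "\<dots> = (if A \<subseteq> UNIV - up x r then 1 else 0)"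
    by (subst sum.delta) auto
  also have "(A \<subseteq> UNIV - up x r) = (r \<in> Nset x A)"
  proof
    assume h: "A \<subseteq> UNIV - up x r"
    have "\<forall>y\<in>A - {x}. (x,y) \<in> r"
    proof
      fix y assume "y \<in> A - {x}"
      then show "(x,y) \<in> r" using h lin_total[OF r, of x y] by (auto simp: up_def)
    qed
    then show "r \<in> Nset x A" unfolding Nset_def using r by blast
  next
    assume "r \<in> Nset x A"
    then have h: "\<forall>y\<in>A - {x}. (x,y) \<in> r" unfolding Nset_def by blast
    show "A \<subseteq> UNIV - up x r"
    proof
      fix y assume "y \<in> A"
      then have "(y,x) \<notin> r" using h lin_asym[OF r, of x y] lin_irrefl[OF r, of x] by (cases "y = x") auto
      then show "y \<in> UNIV - up x r" by (simp add: up_def)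
    qed
  qed
  finally show ?thesis .
qed


definition Gf :: "('a \<Rightarrow> 'a set \<Rightarrow> real) \<Rightarrow> 'a set \<Rightarrow> real" where
  "Gf w D = (\<Sum>y\<in>D. w y D)"

definition stp :: "('a \<Rightarrow> 'a set \<Rightarrow> real) \<Rightarrow> 'a \<Rightarrow> 'a set \<Rightarrow> real" where
  "stp w y D = (if y \<notin> D then 0 else if Gf w D = 0 then (if y = (SOME z. z \<in> D) then 1 else 0)
                else w y D / Gf w D)"

fun wt :: "('a \<Rightarrow> 'a set \<Rightarrow> real) \<Rightarrow> 'a set \<Rightarrow> 'a list \<Rightarrow> real" where
  "wt w D [] = 1"
| "wt w D (y # ys) = stp w y D * wt w (D - {y}) ys"

definition ordl :: "'a list \<Rightarrow> ('a \<times> 'a) set" where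
  "ordl xs = {(xs ! i, xs ! j) | i j. i < j \<and> j < length xs}"

definition flowdist :: "('a::finite \<Rightarrow> 'a set \<Rightarrow> real) \<Rightarrow> ('a \<times> 'a) set \<Rightarrow> real" where
  "flowdist w r = (\<Sum>xs\<in>permutations_of_set UNIV.
      if ordl xs = r then Gf w UNIV * wt w UNIV xs else 0)"

lemma stp_sum:
  assumes "finite D" "D \<noteq> {}"
  shows "(\<Sum>y\<in>D. stp w y D) = 1"
proof (cases "Gf w D = 0")
  case True
  have s: "(SOME z. z \<in> D) \<in> D" using assms(2) by (simp add: some_in_eq)
  have "(\<Sum>y\<in>D. stp w y D) = (\<Sum>y\<in>D. if y = (SOME z. z \<in> D) then 1 else 0)"
    by (intro sum.cong) (auto simp: stp_def True)
  also have "\<dots> = 1" using s assms(1) by simp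
  finally show ?thesis .
next
  case False
  have "(\<Sum>y\<in>D. stp w y D) = (\<Sum>y\<in>D. w y D / Gf w D)"
    by (intro sum.cong) (auto simp: stp_def False)
  also have "\<dots> = Gf w D / Gf w D" unfolding Gf_def by (rule sum_divide_distrib[symmetric])
  also have "\<dots> = 1" using False by simp
  finally show ?thesis .
qed

lemma wt_append: "wt w D (as @ l) = wt w D as * wt w (D - set as) l"
  by (induction as arbitrary: D) (auto simp: Diff_insert2[symmetric] ac_simps)

lemma wt_single: "wt w D [z] = stp w z D" by simp

lemma sum_perms_cons:
  assumes "finite D" "D \<noteq> {}"
  shows "(\<Sum>xs\<in>permutations_of_set D. f xs) = (\<Sum>y\<in>D. \<Sum>ys\<in>permutations_of_set (D - {y}). f (y # ys))"
proof -
  have "(\<Sum>xs\<in>permutations_of_set D. f xs) = (\<Sum>xs\<in>(\<Union>y\<in>D. (\<lambda>xs. y # xs) ` permutations_of_set (D - {y})). f xs)"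
    using permutations_of_set_nonempty[OF assms(2)] by simp
  also have "\<dots> = (\<Sum>y\<in>D. \<Sum>xs\<in>(\<lambda>xs. y # xs) ` permutations_of_set (D - {y}). f xs)"
    by (rule sum.UNION_disjoint) (use assms(1) in auto)
  also have "\<dots> = (\<Sum>y\<in>D. \<Sum>ys\<in>permutations_of_set (D - {y}). f (y # ys))"
  proof (rule sum.cong[OF refl])
    fix y
    have "inj_on ((#) y) (permutations_of_set (D - {y}))" by (simp add: inj_on_def)
    then show "(\<Sum>xs\<in>(\<lambda>xs. y # xs) ` permutations_of_set (D - {y}). f xs) = (\<Sum>ys\<in>permutations_of_set (D - {y}). f (y # ys))"
      by (simp add: sum.reindex)
  qed
  finally show ?thesis .
qed

lemma sum_perms_rev: "(\<Sum>xs\<in>permutations_of_set D. f (rev xs)) = (\<Sum>xs\<in>permutations_of_set D. f xs)"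
proof -
  have "(\<Sum>xs\<in>rev ` permutations_of_set D. f xs) = (\<Sum>xs\<in>permutations_of_set D. f (rev xs))"
    by (subst sum.reindex) (auto simp: inj_on_def)
  then show ?thesis by simp
qed

lemma sum_perms_snoc:
  assumes "finite D" "D \<noteq> {}"
  shows "(\<Sum>xs\<in>permutations_of_set D. f xs) = (\<Sum>y\<in>D. \<Sum>ys\<in>permutations_of_set (D - {y}). f (ys @ [y]))"
proof -
  have "(\<Sum>xs\<in>permutations_of_set D. f xs) = (\<Sum>xs\<in>permutations_of_set D. f (rev xs))"
    by (rule sum_perms_rev[symmetric])
  also have "\<dots> = (\<Sum>y\<in>D. \<Sum>ys\<in>permutations_of_set (D - {y}). f (rev ys @ [y]))"
    by (simp add: sum_perms_cons[OF assms])
  also have "\<dots> = (\<Sum>y\<in>D. \<Sum>ys\<in>permutations_of_set (D - {y}). f (ys @ [y]))"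
  proof (rule sum.cong[OF refl])
    fix y
    show "(\<Sum>ys\<in>permutations_of_set (D - {y}). f (rev ys @ [y])) = (\<Sum>ys\<in>permutations_of_set (D - {y}). f (ys @ [y]))"
      using sum_perms_rev[of "\<lambda>ys. f (ys @ [y])" "D - {y}"] by simp
  qed
  finally show ?thesis .
qed

lemma CL: "finite D \<Longrightarrow> (\<Sum>xs\<in>permutations_of_set D. wt w D xs) = 1"
proof (induction "card D" arbitrary: D)
  case 0
  then show ?case by simp
next
  case (Suc n)
  then have ne: "D \<noteq> {}" by auto
  have "(\<Sum>xs\<in>permutations_of_set D. wt w D xs)
      = (\<Sum>y\<in>D. \<Sum>ys\<in>permutations_of_set (D - {y}). stp w y D * wt w (D - {y}) ys)"
    by (simp add: sum_perms_cons[OF Suc.prems ne])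
  also have "\<dots> = (\<Sum>y\<in>D. stp w y D * (\<Sum>ys\<in>permutations_of_set (D - {y}). wt w (D - {y}) ys))"
    by (simp add: sum_distrib_left)
  also have "\<dots> = (\<Sum>y\<in>D. stp w y D)"
  proof (intro sum.cong refl)
    fix y assume "y \<in> D"
    then have "(\<Sum>ys\<in>permutations_of_set (D - {y}). wt w (D - {y}) ys) = 1"
      using Suc by simp
    then show "stp w y D * (\<Sum>ys\<in>permutations_of_set (D - {y}). wt w (D - {y}) ys) = stp w y D" by simp
  qed
  also have "\<dots> = 1" by (rule stp_sum[OF Suc.prems ne])
  finally show ?case .
qed

context
  fixes w :: "'a::finite \<Rightarrow> 'a set \<Rightarrow> real"
  assumes nn: "\<And>y C. y \<in> C \<Longrightarrow> 0 \<le> w y C"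
begin

lemma Gf_nonneg: "0 \<le> Gf w D"
  unfolding Gf_def by (rule sum_nonneg) (use nn in auto)

lemma stp_nonneg: "0 \<le> stp w y D"
  unfolding stp_def using nn Gf_nonneg by auto

lemma wt_nonneg: "0 \<le> wt w D xs"
  by (induction xs arbitrary: D) (auto intro: mult_nonneg_nonneg stp_nonneg)

lemma stpG: "y \<in> D \<Longrightarrow> stp w y D * Gf w D = w y D"
proof (cases "Gf w D = 0")
  case True
  assume y: "y \<in> D"
  have "w y D \<le> Gf w D" unfolding Gf_def
    by (rule member_le_sum) (use y nn in auto)
  then have "w y D = 0" using True nn[OF y] by simp
  then show ?thesis using True by simp
next
  case False
  assume "y \<in> D" then show ?thesis using False by (simp add: stp_def)
qed

lemma flowdist_nonneg: "0 \<le> flowdist w r"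
  unfolding flowdist_def
  by (rule sum_nonneg) (auto intro: mult_nonneg_nonneg Gf_nonneg wt_nonneg)

end

lemma ordl_lin:
  assumes "xs \<in> permutations_of_set (UNIV :: 'a set)"
  shows "ordl xs \<in> linorders"
proof -
  have d: "distinct xs" and s: "set xs = UNIV" using assms by (auto dest: permutations_of_setD)
  have "trans (ordl xs)"
  proof (rule transI)
    fix a b c assume "(a,b) \<in> ordl xs" "(b,c) \<in> ordl xs"
    then obtain i j j' k where "i < j" "j < length xs" "a = xs!i" "b = xs!j"
      "j' < k" "k < length xs" "b = xs!j'" "c = xs!k" unfolding ordl_def by blast
    moreover then have "j = j'" using d nth_eq_iff_index_eq by fastforce
    ultimately have "i < k" "k < length xs" "a = xs!i" "c = xs!k" by auto
    then show "(a,c) \<in> ordl xs" unfolding ordl_def by blast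
  qed
  moreover have "irrefl (ordl xs)"
    unfolding irrefl_def ordl_def using d nth_eq_iff_index_eq by fastforce
  moreover have "total_on UNIV (ordl xs)"
  proof (rule total_onI)
    fix a b :: 'a assume "a \<noteq> b"
    obtain i where i: "i < length xs" "xs ! i = a" using s by (metis UNIV_I in_set_conv_nth)
    obtain j where j: "j < length xs" "xs ! j = b" using s by (metis UNIV_I in_set_conv_nth)
    have "i \<noteq> j" using i j \<open>a \<noteq> b\<close> by auto
    then show "(a,b) \<in> ordl xs \<or> (b,a) \<in> ordl xs"
    proof (cases "i < j")
      case True
      then have "(xs!i, xs!j) \<in> ordl xs" unfolding ordl_def using j by blast
      then show ?thesis using i j by simp
    next
      case False
      then have "j < i" using \<open>i \<noteq> j\<close> by simp
      then have "(xs!j, xs!i) \<in> ordl xs" unfolding ordl_def using i by blast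
      then show ?thesis using i j by simp
    qed
  qed
  ultimately show ?thesis unfolding linorders_def strict_linear_order_on_def by simp
qed

lemma up_ordl:
  assumes d: "distinct xs" and i: "i < length xs"
  shows "up (xs ! i) (ordl xs) = set (take i xs)"
proof -
  have "w \<in> up (xs ! i) (ordl xs) \<longleftrightarrow> (\<exists>k<i. xs ! k = w)" for w
  proof
    assume "w \<in> up (xs ! i) (ordl xs)"
    then obtain k j where "k < j" "j < length xs" "w = xs ! k" "xs ! i = xs ! j"
      unfolding up_def ordl_def by blast
    moreover then have "j = i" using d i nth_eq_iff_index_eq by fastforce
    ultimately show "\<exists>k<i. xs ! k = w" by auto
  next
    assume "\<exists>k<i. xs ! k = w"
    then show "w \<in> up (xs ! i) (ordl xs)" unfolding up_def ordl_def using i by auto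
  qed
  moreover have "w \<in> set (take i xs) \<longleftrightarrow> (\<exists>k<i. xs ! k = w)" for w
  proof
    assume "w \<in> set (take i xs)"
    then obtain k where "k < length (take i xs)" "take i xs ! k = w" by (auto simp: in_set_conv_nth)
    then show "\<exists>k<i. xs ! k = w" using i by auto
  next
    assume "\<exists>k<i. xs ! k = w"
    then obtain k where k: "k < i" "xs ! k = w" by blast
    then have "take i xs ! k = w" "k < length (take i xs)" using i by auto
    then show "w \<in> set (take i xs)" by (metis nth_mem)
  qed
  ultimately show ?thesis by blast
qed


context
  fixes w :: "'a::finite \<Rightarrow> 'a set \<Rightarrow> real"
  assumes nn: "\<And>y C. y \<in> C \<Longrightarrow> 0 \<le> w y C"
    and cons: "\<And>C. C \<noteq> {} \<Longrightarrow> C \<noteq> UNIV \<Longrightarrow> Gf w C = (\<Sum>z\<in>UNIV - C. w z (insert z C))"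
begin

lemma PL: "S \<noteq> UNIV \<Longrightarrow> Gf w UNIV * (\<Sum>as\<in>permutations_of_set S. wt w UNIV as) = Gf w (UNIV - S)"
proof (induction "card S" arbitrary: S)
  case 0
  then have "S = {}" by simp
  then show ?case by simp
next
  case (Suc n)
  then have ne: "S \<noteq> {}" by auto
  have fin: "finite S" by simp
  have "Gf w UNIV * (\<Sum>as\<in>permutations_of_set S. wt w UNIV as)
      = Gf w UNIV * (\<Sum>z\<in>S. \<Sum>ys\<in>permutations_of_set (S - {z}). wt w UNIV (ys @ [z]))"
    by (simp add: sum_perms_snoc[OF fin ne])
  also have "\<dots> = (\<Sum>z\<in>S. stp w z (insert z (UNIV - S)) * (Gf w UNIV * (\<Sum>ys\<in>permutations_of_set (S - {z}). wt w UNIV ys)))"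
  proof -
    have "(\<Sum>ys\<in>permutations_of_set (S - {z}). wt w UNIV (ys @ [z]))
        = stp w z (insert z (UNIV - S)) * (\<Sum>ys\<in>permutations_of_set (S - {z}). wt w UNIV ys)"
      if z: "z \<in> S" for z
    proof -
      have "(\<Sum>ys\<in>permutations_of_set (S - {z}). wt w UNIV (ys @ [z]))
          = (\<Sum>ys\<in>permutations_of_set (S - {z}). wt w UNIV ys * stp w z (insert z (UNIV - S)))"
      proof (rule sum.cong[OF refl])
        fix ys assume "ys \<in> permutations_of_set (S - {z})"
        then have "set ys = S - {z}" by (rule permutations_of_setD)
        then have "UNIV - set ys = insert z (UNIV - S)" using z by auto
        then show "wt w UNIV (ys @ [z]) = wt w UNIV ys * stp w z (insert z (UNIV - S))"
          by (simp add: wt_append)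
      qed
      then show ?thesis by (simp add: sum_distrib_left sum_distrib_right ac_simps)
    qed
    then show ?thesis by (simp add: sum_distrib_left ac_simps)
  qed
  also have "\<dots> = (\<Sum>z\<in>S. stp w z (insert z (UNIV - S)) * Gf w (insert z (UNIV - S)))"
  proof (rule sum.cong[OF refl])
    fix z assume z: "z \<in> S"
    have "card (S - {z}) = n" using Suc z by simp
    moreover have "S - {z} \<noteq> UNIV" by auto
    ultimately have "Gf w UNIV * (\<Sum>ys\<in>permutations_of_set (S - {z}). wt w UNIV ys) = Gf w (UNIV - (S - {z}))"
      using Suc by blast
    moreover have "UNIV - (S - {z}) = insert z (UNIV - S)" using z by auto
    ultimately show "stp w z (insert z (UNIV - S)) * (Gf w UNIV * (\<Sum>ys\<in>permutations_of_set (S - {z}). wt w UNIV ys))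
       = stp w z (insert z (UNIV - S)) * Gf w (insert z (UNIV - S))" by simp
  qed
  also have "\<dots> = (\<Sum>z\<in>S. w z (insert z (UNIV - S)))"
    by (rule sum.cong[OF refl]) (rule stpG[OF nn], auto)
  also have "\<dots> = (\<Sum>z\<in>UNIV - (UNIV - S). w z (insert z (UNIV - S)))"
    by (simp add: double_diff)
  also have "\<dots> = Gf w (UNIV - S)"
    by (rule cons[symmetric]) (use Suc.prems ne in auto)
  finally show ?case .
qed

end

lemma decomp_set:
  fixes y :: "'a::finite"
  assumes y: "y \<in> C"
  shows "{xs \<in> permutations_of_set UNIV. up y (ordl xs) = UNIV - C}
       = (\<lambda>(as, bs). as @ y # bs) ` (permutations_of_set (UNIV - C) \<times> permutations_of_set (C - {y}))"
proof (rule set_eqI)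
  fix xs :: "'a list"
  show "xs \<in> {xs \<in> permutations_of_set UNIV. up y (ordl xs) = UNIV - C} \<longleftrightarrow>
        xs \<in> (\<lambda>(as, bs). as @ y # bs) ` (permutations_of_set (UNIV - C) \<times> permutations_of_set (C - {y}))"
  proof
    assume "xs \<in> {xs \<in> permutations_of_set UNIV. up y (ordl xs) = UNIV - C}"
    then have d: "distinct xs" and s: "set xs = UNIV" and u: "up y (ordl xs) = UNIV - C"
      by (auto dest: permutations_of_setD)
    obtain i where i: "i < length xs" "xs ! i = y" using s by (metis UNIV_I in_set_conv_nth)
    define as where "as = take i xs"
    define bs where "bs = drop (Suc i) xs"
    have xs0: "xs = take i xs @ xs ! i # drop (Suc i) xs" by (rule id_take_nth_drop[OF i(1)])
    have xs: "xs = as @ y # bs" unfolding as_def bs_def using xs0 by (simp only: i(2)[symmetric])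
    have sa: "set as = UNIV - C" using up_ordl[OF d i(1)] u i as_def by simp
    have da: "distinct as" and db: "distinct bs" and ya: "y \<notin> set as" and yb: "y \<notin> set bs"
      and ab: "set as \<inter> set bs = {}"
      using d xs by auto
    have "set bs = C - {y}"
    proof -
      have "UNIV = set as \<union> {y} \<union> set bs" using s xs by auto
      then show ?thesis using sa ab yb y by blast
    qed
    then show "xs \<in> (\<lambda>(as, bs). as @ y # bs) ` (permutations_of_set (UNIV - C) \<times> permutations_of_set (C - {y}))"
      using xs sa da db by (auto intro!: image_eqI[of _ _ "(as, bs)"])
  next
    assume "xs \<in> (\<lambda>(as, bs). as @ y # bs) ` (permutations_of_set (UNIV - C) \<times> permutations_of_set (C - {y}))"
    then obtain as bs where xs: "xs = as @ y # bs" and a: "as \<in> permutations_of_set (UNIV - C)"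
      and b: "bs \<in> permutations_of_set (C - {y})" by auto
    have sa: "set as = UNIV - C" "distinct as" using a by (auto dest: permutations_of_setD)
    have sb: "set bs = C - {y}" "distinct bs" using b by (auto dest: permutations_of_setD)
    have d: "distinct xs" using xs sa sb y by auto
    have s: "set xs = UNIV" using xs sa sb y by auto
    have "xs ! length as = y" using xs by simp
    then have "up y (ordl xs) = set (take (length as) xs)"
      using up_ordl[OF d, of "length as"] xs by simp
    also have "\<dots> = UNIV - C" using xs sa by simp
    finally show "xs \<in> {xs \<in> permutations_of_set UNIV. up y (ordl xs) = UNIV - C}"
      using d s by auto
  qed
qed

lemma decomp_inj:
  assumes y: "y \<in> C"
  shows "inj_on (\<lambda>(as, bs). as @ y # bs) (permutations_of_set (UNIV - C) \<times> permutations_of_set (C - {y}))"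
proof (rule inj_onI)
  fix p1 p2 assume p1: "p1 \<in> permutations_of_set (UNIV - C) \<times> permutations_of_set (C - {y})"
    and p2: "p2 \<in> permutations_of_set (UNIV - C) \<times> permutations_of_set (C - {y})"
    and e: "(case p1 of (as, bs) \<Rightarrow> as @ y # bs) = (case p2 of (as, bs) \<Rightarrow> as @ y # bs)"
  obtain a1 b1 where 1: "p1 = (a1, b1)" by (cases p1)
  obtain a2 b2 where 2: "p2 = (a2, b2)" by (cases p2)
  have "y \<notin> set a1" "y \<notin> set b1" using p1 p2 1 2 y by (auto dest: permutations_of_setD)
  moreover have "a1 @ y # b1 = a2 @ y # b2" using e 1 2 by simp
  ultimately show "p1 = p2" using 1 2 append_Cons_eq_iff[of y a1 b1 a2 b2] by simp
qed


lemma finite_lin: "finite (linorders :: ('a::finite \<times> 'a) set set)" by simp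

lemma flowdist_zero:
  fixes w :: "'a::finite \<Rightarrow> 'a set \<Rightarrow> real"
  assumes "r \<notin> linorders" shows "flowdist w r = 0"
  unfolding flowdist_def using ordl_lin assms by (intro sum.neutral) fastforce

lemma flow_swap:
  fixes w :: "'a::finite \<Rightarrow> 'a set \<Rightarrow> real"
  shows "(\<Sum>r\<in>linorders. g r * flowdist w r)
       = (\<Sum>xs\<in>permutations_of_set UNIV. g (ordl xs) * (Gf w UNIV * wt w UNIV xs))"
proof -
  have "(\<Sum>r\<in>linorders. g r * flowdist w r)
      = (\<Sum>r\<in>linorders. \<Sum>xs\<in>permutations_of_set UNIV. g r * (if ordl xs = r then Gf w UNIV * wt w UNIV xs else 0))"
    unfolding flowdist_def by (simp add: sum_distrib_left)
  also have "\<dots> = (\<Sum>xs\<in>permutations_of_set UNIV. \<Sum>r\<in>linorders. g r * (if ordl xs = r then Gf w UNIV * wt w UNIV xs else 0))"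
    by (rule sum.swap)
  also have "\<dots> = (\<Sum>xs\<in>permutations_of_set UNIV. g (ordl xs) * (Gf w UNIV * wt w UNIV xs))"
  proof (rule sum.cong[OF refl])
    fix xs assume xs: "xs \<in> permutations_of_set (UNIV :: 'a set)"
    have "(\<Sum>r\<in>linorders. g r * (if ordl xs = r then Gf w UNIV * wt w UNIV xs else 0))
        = (\<Sum>r\<in>linorders. if ordl xs = r then g (ordl xs) * (Gf w UNIV * wt w UNIV xs) else 0)"
      by (rule sum.cong[OF refl]) auto
    also have "\<dots> = g (ordl xs) * (Gf w UNIV * wt w UNIV xs)"
      using ordl_lin[OF xs] by (simp add: sum.delta)
    finally show "(\<Sum>r\<in>linorders. g r * (if ordl xs = r then Gf w UNIV * wt w UNIV xs else 0))
        = g (ordl xs) * (Gf w UNIV * wt w UNIV xs)" .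
  qed
  finally show ?thesis .
qed

lemma flow_total:
  fixes w :: "'a::finite \<Rightarrow> 'a set \<Rightarrow> real"
  shows "(\<Sum>r\<in>linorders. flowdist w r) = Gf w UNIV"
proof -
  have "(\<Sum>r\<in>linorders. flowdist w r) = (\<Sum>r\<in>linorders. 1 * flowdist w r)" by simp
  also have "\<dots> = (\<Sum>xs\<in>permutations_of_set UNIV. 1 * (Gf w UNIV * wt w UNIV xs))"
    by (rule flow_swap)
  also have "\<dots> = Gf w UNIV * (\<Sum>xs\<in>permutations_of_set UNIV. wt w UNIV xs)"
    by (simp add: sum_distrib_left)
  also have "\<dots> = Gf w UNIV" by (simp add: CL)
  finally show ?thesis .
qed

lemma flow_marg:
  fixes w :: "'a::finite \<Rightarrow> 'a set \<Rightarrow> real"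
  assumes nn: "\<And>y C. y \<in> C \<Longrightarrow> 0 \<le> w y C"
    and cons: "\<And>C. C \<noteq> {} \<Longrightarrow> C \<noteq> UNIV \<Longrightarrow> Gf w C = (\<Sum>z\<in>UNIV - C. w z (insert z C))"
    and y: "y \<in> C"
  shows "(\<Sum>r\<in>linorders. if up y r = UNIV - C then flowdist w r else 0) = w y C"
proof -
  let ?P = "permutations_of_set (UNIV :: 'a set)"
  let ?f = "\<lambda>xs. Gf w UNIV * wt w UNIV xs"
  have "(\<Sum>r\<in>linorders. if up y r = UNIV - C then flowdist w r else 0)
      = (\<Sum>r\<in>linorders. (if up y r = UNIV - C then 1 else 0) * flowdist w r)"
    by (rule sum.cong[OF refl]) auto
  also have "\<dots> = (\<Sum>xs\<in>?P. (if up y (ordl xs) = UNIV - C then 1 else 0) * ?f xs)"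
    by (rule flow_swap)
  also have "\<dots> = (\<Sum>xs\<in>{xs \<in> ?P. up y (ordl xs) = UNIV - C}. ?f xs)"
  proof -
    have "(\<Sum>xs\<in>?P. (if up y (ordl xs) = UNIV - C then 1 else 0) * ?f xs)
        = (\<Sum>xs\<in>?P. if up y (ordl xs) = UNIV - C then ?f xs else 0)"
      by (rule sum.cong[OF refl]) auto
    also have "\<dots> = (\<Sum>xs\<in>{xs \<in> ?P. up y (ordl xs) = UNIV - C}. ?f xs)"
      by (rule sum.inter_filter[symmetric]) simp
    finally show ?thesis .
  qed
  also have "\<dots> = (\<Sum>xs\<in>(\<lambda>(as, bs). as @ y # bs) ` (permutations_of_set (UNIV - C) \<times> permutations_of_set (C - {y})). ?f xs)"
    by (simp add: decomp_set[OF y])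
  also have "\<dots> = (\<Sum>(as,bs)\<in>permutations_of_set (UNIV - C) \<times> permutations_of_set (C - {y}). ?f (as @ y # bs))"
    by (subst sum.reindex[OF decomp_inj[OF y]]) (simp add: case_prod_beta comp_def)
  also have "\<dots> = (\<Sum>as\<in>permutations_of_set (UNIV - C). \<Sum>bs\<in>permutations_of_set (C - {y}). ?f (as @ y # bs))"
    by (rule sum.cartesian_product[symmetric])
  also have "\<dots> = (\<Sum>as\<in>permutations_of_set (UNIV - C). Gf w UNIV * wt w UNIV as * stp w y C *
                     (\<Sum>bs\<in>permutations_of_set (C - {y}). wt w (C - {y}) bs))"
  proof (rule sum.cong[OF refl])
    fix as assume "as \<in> permutations_of_set (UNIV - C)"
    then have sa: "set as = UNIV - C" by (rule permutations_of_setD)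
    have e1: "UNIV - set as = C" using sa by auto
    have e2: "C - {y} = C - {y}" ..
    have h: "?f (as @ y # bs) = (Gf w UNIV * wt w UNIV as * stp w y C) * wt w (C - {y}) bs" for bs
      by (simp add: wt_append e1)
    show "(\<Sum>bs\<in>permutations_of_set (C - {y}). ?f (as @ y # bs)) =
          Gf w UNIV * wt w UNIV as * stp w y C * (\<Sum>bs\<in>permutations_of_set (C - {y}). wt w (C - {y}) bs)"
      unfolding h by (rule sum_distrib_left[symmetric])
  qed
  also have "\<dots> = (\<Sum>as\<in>permutations_of_set (UNIV - C). Gf w UNIV * wt w UNIV as * stp w y C)"
    by (simp add: CL)
  also have "\<dots> = (Gf w UNIV * (\<Sum>as\<in>permutations_of_set (UNIV - C). wt w UNIV as)) * stp w y C"
    by (simp add: sum_distrib_left sum_distrib_right)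
  also have "\<dots> = Gf w (UNIV - (UNIV - C)) * stp w y C"
  proof -
    have "UNIV - C \<noteq> UNIV" using y by auto
    then show ?thesis using PL[OF nn cons, of "UNIV - C"] by simp
  qed
  also have "\<dots> = w y C" using stpG[OF nn y] by (simp add: double_diff ac_simps)
  finally show ?thesis .
qed


lemma mob_key:
  fixes W :: "'a::finite \<Rightarrow> 'a set \<Rightarrow> real"
  shows "(\<Sum>B'\<in>{B'. B \<subseteq> B'}. \<Sum>y\<in>B' - B. W y B') = (\<Sum>C\<in>{C. B \<subseteq> C}. \<Sum>z\<in>UNIV - C. W z (insert z C))"
proof -
  have "(\<Sum>B'\<in>{B'. B \<subseteq> B'}. \<Sum>y\<in>B' - B. W y B') = (\<Sum>(B',y)\<in>(SIGMA B':{B'. B \<subseteq> B'}. B' - B). W y B')"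
    by (rule sum.Sigma) auto
  also have "\<dots> = (\<Sum>(C,z)\<in>(SIGMA C:{C. B \<subseteq> C}. UNIV - C). W z (insert z C))"
  proof (rule sum.reindex_bij_witness[where j = "\<lambda>(B',y). (B' - {y}, y)" and i = "\<lambda>(C,z). (insert z C, z)"])
    fix a assume "a \<in> (SIGMA B':{B'. B \<subseteq> B'}. B' - B)"
    then obtain B' y where a: "a = (B', y)" "B \<subseteq> B'" "y \<in> B'" "y \<notin> B" by auto
    show "(case case a of (B', y) \<Rightarrow> (B' - {y}, y) of (C, z) \<Rightarrow> (insert z C, z)) = a"
      using a by auto
    show "(case a of (B', y) \<Rightarrow> (B' - {y}, y)) \<in> (SIGMA C:{C. B \<subseteq> C}. UNIV - C)"
      using a by auto
    show "(case case a of (B', y) \<Rightarrow> (B' - {y}, y) of (C, z) \<Rightarrow> W z (insert z C)) = (case a of (B', y) \<Rightarrow> W y B')"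
      using a by (simp add: insert_absorb)
  next
    fix b assume "b \<in> (SIGMA C:{C. B \<subseteq> C}. UNIV - C)"
    then obtain C z where b: "b = (C, z)" "B \<subseteq> C" "z \<notin> C" by auto
    show "(case case b of (C, z) \<Rightarrow> (insert z C, z) of (B', y) \<Rightarrow> (B' - {y}, y)) = b"
      using b by auto
    show "(case b of (C, z) \<Rightarrow> (insert z C, z)) \<in> (SIGMA B':{B'. B \<subseteq> B'}. B' - B)"
      using b by auto
  qed
  also have "\<dots> = (\<Sum>C\<in>{C. B \<subseteq> C}. \<Sum>z\<in>UNIV - C. W z (insert z C))"
    by (rule sum.Sigma[symmetric]) auto
  finally show ?thesis .
qed

lemma mob:
  fixes W :: "'a::finite \<Rightarrow> 'a set \<Rightarrow> real"
  shows "(\<Sum>y\<in>B. \<Sum>B'\<in>{B'. B \<subseteq> B'}. W y B')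
       = (\<Sum>C\<in>{C. B \<subseteq> C}. (\<Sum>y\<in>C. W y C) - (\<Sum>z\<in>UNIV - C. W z (insert z C)))"
proof -
  have "(\<Sum>y\<in>B. \<Sum>B'\<in>{B'. B \<subseteq> B'}. W y B') = (\<Sum>B'\<in>{B'. B \<subseteq> B'}. \<Sum>y\<in>B. W y B')"
    by (rule sum.swap)
  also have "\<dots> = (\<Sum>B'\<in>{B'. B \<subseteq> B'}. (\<Sum>y\<in>B'. W y B') - (\<Sum>y\<in>B' - B. W y B'))"
  proof (rule sum.cong[OF refl])
    fix B' assume "B' \<in> {B'. B \<subseteq> B'}"
    then have "B \<subseteq> B'" by simp
    then show "(\<Sum>y\<in>B. W y B') = (\<Sum>y\<in>B'. W y B') - (\<Sum>y\<in>B' - B. W y B')"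
      using sum.subset_diff[of B B' "\<lambda>y. W y B'"] by simp
  qed
  also have "\<dots> = (\<Sum>B'\<in>{B'. B \<subseteq> B'}. \<Sum>y\<in>B'. W y B') - (\<Sum>B'\<in>{B'. B \<subseteq> B'}. \<Sum>y\<in>B' - B. W y B')"
    by (rule sum_subtractf)
  also have "\<dots> = (\<Sum>C\<in>{C. B \<subseteq> C}. \<Sum>y\<in>C. W y C) - (\<Sum>C\<in>{C. B \<subseteq> C}. \<Sum>z\<in>UNIV - C. W z (insert z C))"
    by (simp add: mob_key)
  also have "\<dots> = (\<Sum>C\<in>{C. B \<subseteq> C}. (\<Sum>y\<in>C. W y C) - (\<Sum>z\<in>UNIV - C. W z (insert z C)))"
    by (rule sum_subtractf[symmetric])
  finally show ?thesis .
qed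

lemma step1:
  fixes q :: "'a::finite \<Rightarrow> 'a \<Rightarrow> 'a set \<Rightarrow> 'a set \<Rightarrow> real"
  assumes b: "cond_b q" and x: "x \<in> A'" and B: "B \<noteq> {}"
  shows "(\<Sum>y\<in>B. \<Sum>B'\<in>{B'. B \<subseteq> B'}. q x y A' B') = (\<Sum>y\<in>UNIV. q x y A' UNIV)"
proof -
  have "(\<Sum>y\<in>B. \<Sum>B'\<in>{B'. B \<subseteq> B'}. q x y A' B')
      = (\<Sum>C\<in>{C. B \<subseteq> C}. (\<Sum>y\<in>C. q x y A' C) - (\<Sum>z\<in>UNIV - C. q x z A' (insert z C)))"
    by (rule mob)
  also have "\<dots> = (\<Sum>C\<in>{C. B \<subseteq> C}. if C = UNIV then (\<Sum>y\<in>UNIV. q x y A' UNIV) else 0)"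
  proof (rule sum.cong[OF refl])
    fix C assume C: "C \<in> {C. B \<subseteq> C}"
    show "(\<Sum>y\<in>C. q x y A' C) - (\<Sum>z\<in>UNIV - C. q x z A' (insert z C))
        = (if C = UNIV then (\<Sum>y\<in>UNIV. q x y A' UNIV) else 0)"
    proof (cases "C = UNIV")
      case True then show ?thesis by simp
    next
      case False
      have "A' \<in> nesets" using x by (auto simp: nesets_def)
      moreover have "C \<noteq> {}" using C B by auto
      ultimately show ?thesis using b False x unfolding cond_b_def by auto
    qed
  qed
  also have "\<dots> = (\<Sum>y\<in>UNIV. q x y A' UNIV)" by (simp add: sum.delta)
  finally show ?thesis .
qed

definition QQ :: "('a \<Rightarrow> 'a \<Rightarrow> 'a set \<Rightarrow> 'a set \<Rightarrow> real) \<Rightarrow> 'a \<Rightarrow> 'a set \<Rightarrow> real" where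
  "QQ q x A = (\<Sum>y\<in>UNIV. q x y A UNIV)"

definition EE :: "('a::finite \<Rightarrow> 'a \<Rightarrow> 'a set \<Rightarrow> 'a set \<Rightarrow> real) \<Rightarrow> 'a set \<Rightarrow> real" where
  "EE q C = (\<Sum>x\<in>C. QQ q x C) - (\<Sum>z\<in>UNIV - C. QQ q z (insert z C))"

lemma eq_d_EE: "eq_d q A \<longleftrightarrow> EE q A = 0"
  unfolding eq_d_def EE_def QQ_def by simp

lemma eq_e_EE: "eq_e q \<longleftrightarrow> EE q UNIV = 1"
  unfolding eq_e_def EE_def QQ_def by simp

lemma step2:
  fixes q :: "'a::finite \<Rightarrow> 'a \<Rightarrow> 'a set \<Rightarrow> 'a set \<Rightarrow> real"
  assumes X: "Xlim \<subseteq> nesets \<times> nesets" and rj: "rjcr Xlim p"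
    and a: "cond_a Xlim p q" and b: "cond_b q" and AB: "(A, B) \<in> Xlim"
  shows "(\<Sum>C\<in>{C. A \<subseteq> C}. EE q C) = 1"
proof -
  have Bne: "B \<noteq> {}" using X AB by (auto simp: nesets_def)
  have "1 = (\<Sum>x\<in>A. \<Sum>y\<in>B. p x y A B)" using rj AB unfolding rjcr_def by auto
  also have "\<dots> = (\<Sum>x\<in>A. \<Sum>y\<in>B. \<Sum>A'\<in>{A'. A \<subseteq> A'}. \<Sum>B'\<in>{B'. B \<subseteq> B'}. q x y A' B')"
    using a AB unfolding cond_a_def by (intro sum.cong refl) auto
  also have "\<dots> = (\<Sum>x\<in>A. \<Sum>A'\<in>{A'. A \<subseteq> A'}. \<Sum>y\<in>B. \<Sum>B'\<in>{B'. B \<subseteq> B'}. q x y A' B')"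
    by (rule sum.cong[OF refl]) (rule sum.swap)
  also have "\<dots> = (\<Sum>x\<in>A. \<Sum>A'\<in>{A'. A \<subseteq> A'}. QQ q x A')"
  proof (rule sum.cong[OF refl], rule sum.cong[OF refl])
    fix x A' assume "x \<in> A" "A' \<in> {A'. A \<subseteq> A'}"
    then have "x \<in> A'" by auto
    then show "(\<Sum>y\<in>B. \<Sum>B'\<in>{B'. B \<subseteq> B'}. q x y A' B') = QQ q x A'"
      unfolding QQ_def by (rule step1[OF b _ Bne])
  qed
  also have "\<dots> = (\<Sum>C\<in>{C. A \<subseteq> C}. EE q C)"
    unfolding EE_def by (rule mob)
  finally show ?thesis by simp
qed

lemma three_to_two:
  fixes q :: "'a::finite \<Rightarrow> 'a \<Rightarrow> 'a set \<Rightarrow> 'a set \<Rightarrow> real"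
  assumes X: "Xlim \<subseteq> nesets \<times> nesets" and rj: "rjcr Xlim p"
    and a: "cond_a Xlim p q" and b: "cond_b q" and d': "cond_d' Xlim q" and e': "cond_e' Xlim q"
  shows "cond_d q \<and> eq_e q"
proof -
  have E1: "EE q UNIV = 1"
  proof (cases "\<exists>B\<in>nesets. (UNIV, B) \<in> Xlim")
    case True
    then obtain B where "(UNIV, B) \<in> Xlim" by blast
    from step2[OF X rj a b this] have "(\<Sum>C\<in>{C. UNIV \<subseteq> C}. EE q C) = 1" .
    moreover have "{C. UNIV \<subseteq> C} = {UNIV :: 'a set}" by auto
    ultimately show ?thesis by simp
  next
    case False
    then show ?thesis using e' unfolding cond_e'_def eq_e_EE by blast
  qed
  have main: "\<forall>A. card (UNIV - A) = n \<longrightarrow> A \<noteq> {} \<longrightarrow> A \<noteq> UNIV \<longrightarrow> EE q A = 0" for n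
  proof (induction n rule: less_induct)
    case (less n)
    show ?case
    proof (intro allI impI)
      fix A :: "'a set" assume n: "card (UNIV - A) = n" and ne: "A \<noteq> {}" and nu: "A \<noteq> UNIV"
      show "EE q A = 0"
      proof (cases "\<exists>B\<in>nesets. (A, B) \<in> Xlim")
        case False
        then show ?thesis using d' ne nu unfolding cond_d'_def eq_d_EE nesets_def by blast
      next
        case True
        then obtain B where AB: "(A, B) \<in> Xlim" by blast
        have "1 = (\<Sum>C\<in>{C. A \<subseteq> C}. EE q C)" using step2[OF X rj a b AB] by simp
        also have "\<dots> = (\<Sum>C\<in>{C. A \<subseteq> C}. (if C = A then EE q A else 0) + (if C = UNIV then 1 else 0))"
        proof (rule sum.cong[OF refl])
          fix C assume C: "C \<in> {C. A \<subseteq> C}"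
          show "EE q C = (if C = A then EE q A else 0) + (if C = UNIV then 1 else 0)"
          proof (cases "C = A \<or> C = UNIV")
            case True then show ?thesis using nu E1 by auto
          next
            case False
            then have "A \<subset> C" using C by auto
            then have "UNIV - C \<subset> UNIV - A" using False by auto
            then have "card (UNIV - C) < n" using n psubset_card_mono[of "UNIV - A" "UNIV - C"] by simp
            moreover have "C \<noteq> {}" using C ne by auto
            ultimately have "EE q C = 0" using less False by blast
            then show ?thesis using False by simp
          qed
        qed
        also have "\<dots> = EE q A + 1" using nu by (simp add: sum.distrib sum.delta)
        finally show ?thesis by simp
      qed
    qed
  qed
  have "cond_d q" unfolding cond_d_def eq_d_EE nesets_def using main by blast
  then show ?thesis using E1 eq_e_EE by blast
qed


lemma sum_ind_restrict:
  assumes "finite L" "N \<subseteq> L"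
  shows "(\<Sum>r\<in>L. (if r \<in> N then 1 else 0) * g r) = (\<Sum>r\<in>N. g r :: real)"
proof -
  have "(\<Sum>r\<in>L. (if r \<in> N then 1 else 0) * g r) = (\<Sum>r\<in>L. if r \<in> N then g r else 0)"
    by (rule sum.cong[OF refl]) auto
  also have "\<dots> = sum g (L \<inter> N)" by (rule sum.inter_restrict[symmetric]) (rule assms(1))
  also have "L \<inter> N = N" using assms(2) by auto
  finally show ?thesis .
qed

lemma Nset_sub: "Nset x A \<subseteq> linorders" unfolding Nset_def by auto

lemma rep_sum:
  fixes f :: "('a::finite \<times> 'a) set \<Rightarrow> ('a \<times> 'a) set \<Rightarrow> real"
  assumes x: "x \<in> A" and y: "y \<in> B"
  shows "(\<Sum>A'\<in>{A'. A \<subseteq> A'}. \<Sum>B'\<in>{B'. B \<subseteq> B'}. \<Sum>r\<in>linorders. \<Sum>r'\<in>linorders.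
            (if up x r = UNIV - A' then 1 else 0) * (if up y r' = UNIV - B' then 1 else 0) * f r r')
       = (\<Sum>r\<in>Nset x A. \<Sum>r'\<in>Nset y B. f r r')"
proof -
  let ?L = "linorders :: ('a \<times> 'a) set set"
  let ?g = "\<lambda>A' B' r r'. (if up x r = UNIV - A' then 1 else 0) * (if up y r' = UNIV - B' then 1 else 0) * f r r'"
  have "(\<Sum>A'\<in>{A'. A \<subseteq> A'}. \<Sum>B'\<in>{B'. B \<subseteq> B'}. \<Sum>r\<in>?L. \<Sum>r'\<in>?L. ?g A' B' r r')
      = (\<Sum>A'\<in>{A'. A \<subseteq> A'}. \<Sum>r\<in>?L. \<Sum>B'\<in>{B'. B \<subseteq> B'}. \<Sum>r'\<in>?L. ?g A' B' r r')"
    by (rule sum.cong[OF refl]) (rule sum.swap)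
  also have "\<dots> = (\<Sum>r\<in>?L. \<Sum>A'\<in>{A'. A \<subseteq> A'}. \<Sum>B'\<in>{B'. B \<subseteq> B'}. \<Sum>r'\<in>?L. ?g A' B' r r')"
    by (rule sum.swap)
  also have "\<dots> = (\<Sum>r\<in>?L. \<Sum>A'\<in>{A'. A \<subseteq> A'}. \<Sum>r'\<in>?L. \<Sum>B'\<in>{B'. B \<subseteq> B'}. ?g A' B' r r')"
    by (rule sum.cong[OF refl], rule sum.cong[OF refl]) (rule sum.swap)
  also have "\<dots> = (\<Sum>r\<in>?L. \<Sum>r'\<in>?L. \<Sum>A'\<in>{A'. A \<subseteq> A'}. \<Sum>B'\<in>{B'. B \<subseteq> B'}. ?g A' B' r r')"
    by (rule sum.cong[OF refl]) (rule sum.swap)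
  also have "\<dots> = (\<Sum>r\<in>?L. \<Sum>r'\<in>?L. (if r \<in> Nset x A then 1 else 0) * ((if r' \<in> Nset y B then 1 else 0) * f r r'))"
  proof (rule sum.cong[OF refl], rule sum.cong[OF refl])
    fix r r' assume r: "r \<in> ?L" and r': "r' \<in> ?L"
    have "(\<Sum>A'\<in>{A'. A \<subseteq> A'}. \<Sum>B'\<in>{B'. B \<subseteq> B'}. ?g A' B' r r')
        = (\<Sum>A'\<in>{A'. A \<subseteq> A'}. if up x r = UNIV - A' then 1 else 0) *
          (\<Sum>B'\<in>{B'. B \<subseteq> B'}. if up y r' = UNIV - B' then 1 else 0) * f r r'"
    proof -
      have "(\<Sum>A'\<in>{A'. A \<subseteq> A'}. if up x r = UNIV - A' then 1 else 0) *
          (\<Sum>B'\<in>{B'. B \<subseteq> B'}. if up y r' = UNIV - B' then 1 else 0) * f r r'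
          = (\<Sum>A'\<in>{A'. A \<subseteq> A'}. \<Sum>B'\<in>{B'. B \<subseteq> B'}. (if up x r = UNIV - A' then 1 else 0) *
             (if up y r' = UNIV - B' then 1 else 0)) * f r r'"
        by (simp only: sum_product)
      also have "\<dots> = (\<Sum>A'\<in>{A'. A \<subseteq> A'}. \<Sum>B'\<in>{B'. B \<subseteq> B'}. ?g A' B' r r')"
        by (simp only: sum_distrib_right)
      finally show ?thesis by simp
    qed
    also have "\<dots> = (if r \<in> Nset x A then 1 else 0) * ((if r' \<in> Nset y B then 1 else 0) * f r r')"
      using K2[OF r x] K2[OF r' y] by simp
    finally show "(\<Sum>A'\<in>{A'. A \<subseteq> A'}. \<Sum>B'\<in>{B'. B \<subseteq> B'}. ?g A' B' r r')
        = (if r \<in> Nset x A then 1 else 0) * ((if r' \<in> Nset y B then 1 else 0) * f r r')" .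
  qed
  also have "\<dots> = (\<Sum>r\<in>?L. (if r \<in> Nset x A then 1 else 0) * (\<Sum>r'\<in>Nset y B. f r r'))"
    by (simp add: sum_distrib_left[symmetric] sum_ind_restrict[OF finite_lin Nset_sub])
  also have "\<dots> = (\<Sum>r\<in>Nset x A. \<Sum>r'\<in>Nset y B. f r r')"
    by (rule sum_ind_restrict[OF finite_lin Nset_sub])
  finally show ?thesis .
qed

lemma gen_swap:
  fixes a :: "('a::finite \<times> 'a) set \<Rightarrow> real"
  shows "(\<Sum>y\<in>Y. \<Sum>r\<in>linorders. \<Sum>r'\<in>linorders. a r * b y r' * c r r')
       = (\<Sum>r\<in>linorders. \<Sum>r'\<in>linorders. a r * (\<Sum>y\<in>Y. b y r') * c r r')"
proof -
  have "(\<Sum>y\<in>Y. \<Sum>r\<in>linorders. \<Sum>r'\<in>linorders. a r * b y r' * c r r')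
      = (\<Sum>r\<in>linorders. \<Sum>y\<in>Y. \<Sum>r'\<in>linorders. a r * b y r' * c r r')"
    by (rule sum.swap)
  also have "\<dots> = (\<Sum>r\<in>linorders. \<Sum>r'\<in>linorders. \<Sum>y\<in>Y. a r * b y r' * c r r')"
    by (rule sum.cong[OF refl]) (rule sum.swap)
  also have "\<dots> = (\<Sum>r\<in>linorders. \<Sum>r'\<in>linorders. a r * (\<Sum>y\<in>Y. b y r') * c r r')"
    by (simp add: sum_distrib_left sum_distrib_right)
  finally show ?thesis .
qed


lemma swap_ind:
  fixes f :: "('a::finite \<times> 'a) set \<Rightarrow> real"
  shows "(\<Sum>x\<in>Y. \<Sum>r\<in>linorders. (if P x r then 1 else 0) * f r)
       = (\<Sum>r\<in>linorders. (\<Sum>x\<in>Y. if P x r then 1 else 0) * f r)"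
  by (subst sum.swap) (simp add: sum_distrib_right)

lemma one_to_two:
  fixes Xlim :: "('a::finite set \<times> 'a set) set"
    and p :: "'a \<Rightarrow> 'a \<Rightarrow> 'a set \<Rightarrow> 'a set \<Rightarrow> real"
  assumes c: "cdru_rep Xlim p"
  shows "\<exists>q. cond_a Xlim p q \<and> cond_b q \<and> cond_c q \<and> cond_d q \<and> eq_e q"
proof -
  let ?L = "linorders :: ('a \<times> 'a) set set"
  obtain \<nu> t where nu: "is_dist \<nu>" and tt: "\<forall>x. \<forall>r\<in>?L. is_dist (t x r)"
    and rep: "\<forall>(A, B)\<in>Xlim. \<forall>x\<in>A. \<forall>y\<in>B. p x y A B = (\<Sum>r\<in>Nset x A. \<Sum>r'\<in>Nset y B. \<nu> r * t x r r')"
    using c unfolding cdru_rep_def by blast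
  have nu0: "\<And>r. 0 \<le> \<nu> r" and nu1: "(\<Sum>r\<in>?L. \<nu> r) = 1" using nu unfolding is_dist_def by auto
  have t0: "\<And>x r r'. r \<in> ?L \<Longrightarrow> 0 \<le> t x r r'" and t1: "\<And>x r. r \<in> ?L \<Longrightarrow> (\<Sum>r'\<in>?L. t x r r') = 1"
    using tt unfolding is_dist_def by auto
  define q where "q x y A B = (\<Sum>r\<in>?L. \<Sum>r'\<in>?L. (if up x r = UNIV - A then 1 else 0) *
      (if up y r' = UNIV - B then 1 else 0) * (\<nu> r * t x r r'))" for x y A B
  have Qf: "(\<Sum>y\<in>UNIV. q x y A UNIV) = (\<Sum>r\<in>?L. (if up x r = UNIV - A then 1 else 0) * \<nu> r)" for x A
  proof -
    have "(\<Sum>y\<in>UNIV. q x y A UNIV) = (\<Sum>r\<in>?L. \<Sum>r'\<in>?L. (if up x r = UNIV - A then 1 else 0) *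
        (\<Sum>y\<in>UNIV. if up y r' = UNIV - UNIV then 1 else 0) * (\<nu> r * t x r r'))"
      unfolding q_def by (rule gen_swap)
    also have "\<dots> = (\<Sum>r\<in>?L. \<Sum>r'\<in>?L. (if up x r = UNIV - A then 1 else 0) * \<nu> r * t x r r')"
    proof (rule sum.cong[OF refl], rule sum.cong[OF refl])
      fix r r' assume r': "r' \<in> ?L"
      have h: "(\<Sum>y\<in>UNIV. if up y r' = UNIV - UNIV then 1 else 0 :: real) = 1"
        using K1top[OF r'] by (simp only: Diff_cancel)
      show "(if up x r = UNIV - A then 1 else 0) *
        (\<Sum>y\<in>UNIV. if up y r' = UNIV - UNIV then 1 else 0) * (\<nu> r * t x r r')
        = (if up x r = UNIV - A then 1 else 0) * \<nu> r * t x r r'" unfolding h by simp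
    qed
    also have "\<dots> = (\<Sum>r\<in>?L. (if up x r = UNIV - A then 1 else 0) * \<nu> r * (\<Sum>r'\<in>?L. t x r r'))"
      by (simp add: sum_distrib_left)
    also have "\<dots> = (\<Sum>r\<in>?L. (if up x r = UNIV - A then 1 else 0) * \<nu> r)"
      using t1 by simp
    finally show ?thesis .
  qed
  have ca: "cond_a Xlim p q"
    unfolding cond_a_def
  proof (intro ballI, clarify)
    fix A B x y assume AB: "(A, B) \<in> Xlim" and x: "x \<in> A" and y: "y \<in> B"
    show "(\<Sum>A'\<in>{A'. A \<subseteq> A'}. \<Sum>B'\<in>{B'. B \<subseteq> B'}. q x y A' B') = p x y A B"
      unfolding q_def using rep_sum[OF x y, of "\<lambda>r r'. \<nu> r * t x r r'"] rep AB x y by auto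
  qed
  have cb: "cond_b q"
    unfolding cond_b_def
  proof (intro ballI allI impI)
    fix A B :: "'a set" and x :: 'a assume A: "A \<in> nesets" and B: "B \<noteq> {} \<and> B \<noteq> UNIV" and x: "x \<in> A"
    have "(\<Sum>y\<in>B. q x y A B) = (\<Sum>r\<in>?L. \<Sum>r'\<in>?L. (if up x r = UNIV - A then 1 else 0) *
        (\<Sum>y\<in>B. if up y r' = UNIV - B then 1 else 0) * (\<nu> r * t x r r'))"
      unfolding q_def by (rule gen_swap)
    also have "\<dots> = (\<Sum>r\<in>?L. \<Sum>r'\<in>?L. (if up x r = UNIV - A then 1 else 0) *
        (\<Sum>z\<in>UNIV - B. if up z r' = UNIV - insert z B then 1 else 0) * (\<nu> r * t x r r'))"
    proof (rule sum.cong[OF refl], rule sum.cong[OF refl])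
      fix r r' assume r': "r' \<in> ?L"
      have h: "(\<Sum>y\<in>B. if up y r' = UNIV - B then 1 else 0 :: real) = (\<Sum>z\<in>UNIV - B. if up z r' = UNIV - insert z B then 1 else 0)"
        using K1[OF r'] B by blast
      show "(if up x r = UNIV - A then 1 else 0) * (\<Sum>y\<in>B. if up y r' = UNIV - B then 1 else 0) * (\<nu> r * t x r r') =
        (if up x r = UNIV - A then 1 else 0) * (\<Sum>z\<in>UNIV - B. if up z r' = UNIV - insert z B then 1 else 0) * (\<nu> r * t x r r')"
        unfolding h ..
    qed
    also have "\<dots> = (\<Sum>z\<in>UNIV - B. q x z A (insert z B))"
      unfolding q_def by (rule gen_swap[symmetric])
    finally show "(\<Sum>y\<in>B. q x y A B) = (\<Sum>z\<in>UNIV - B. q x z A (insert z B))" .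
  qed
  have cc: "cond_c q"
    unfolding cond_c_def q_def
    by (intro ballI sum_nonneg mult_nonneg_nonneg) (auto intro: nu0 t0)
  have cd: "cond_d q"
    unfolding cond_d_def eq_d_def
  proof (intro ballI impI)
    fix A :: "'a set" assume A: "A \<in> nesets" "A \<noteq> UNIV"
    have "(\<Sum>x\<in>A. \<Sum>y\<in>UNIV. q x y A UNIV) = (\<Sum>x\<in>A. \<Sum>r\<in>?L. (if up x r = UNIV - A then 1 else 0) * \<nu> r)"
      by (simp add: Qf)
    also have "\<dots> = (\<Sum>r\<in>?L. (\<Sum>x\<in>A. if up x r = UNIV - A then 1 else 0) * \<nu> r)"
      by (rule swap_ind)
    also have "\<dots> = (\<Sum>r\<in>?L. (\<Sum>z\<in>UNIV - A. if up z r = UNIV - insert z A then 1 else 0) * \<nu> r)"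
    proof (rule sum.cong[OF refl])
      fix r assume r: "r \<in> ?L"
      have h: "(\<Sum>y\<in>A. if up y r = UNIV - A then 1 else 0 :: real) = (\<Sum>z\<in>UNIV - A. if up z r = UNIV - insert z A then 1 else 0)"
        using K1[OF r] A by (auto simp: nesets_def)
      show "(\<Sum>x\<in>A. if up x r = UNIV - A then 1 else 0) * \<nu> r =
        (\<Sum>z\<in>UNIV - A. if up z r = UNIV - insert z A then 1 else 0) * \<nu> r"
        unfolding h ..
    qed
    also have "\<dots> = (\<Sum>z\<in>UNIV - A. \<Sum>r\<in>?L. (if up z r = UNIV - insert z A then 1 else 0) * \<nu> r)"
      by (rule swap_ind[symmetric])
    also have "\<dots> = (\<Sum>z\<in>UNIV - A. \<Sum>y\<in>UNIV. q z y (insert z A) UNIV)"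
      by (simp add: Qf)
    finally show "(\<Sum>x\<in>A. \<Sum>y\<in>UNIV. q x y A UNIV) = (\<Sum>z\<in>UNIV - A. \<Sum>y\<in>UNIV. q z y (insert z A) UNIV)" .
  qed
  have ce: "eq_e q"
    unfolding eq_e_def
  proof -
    have "(\<Sum>x\<in>UNIV. \<Sum>y\<in>UNIV. q x y UNIV UNIV) = (\<Sum>x\<in>UNIV. \<Sum>r\<in>?L. (if up x r = UNIV - UNIV then 1 else 0) * \<nu> r)"
      by (simp only: Qf)
    also have "\<dots> = (\<Sum>r\<in>?L. (\<Sum>x\<in>UNIV. if up x r = UNIV - UNIV then 1 else 0) * \<nu> r)"
      by (rule swap_ind)
    also have "\<dots> = (\<Sum>r\<in>?L. \<nu> r)"
    proof (rule sum.cong[OF refl])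
      fix r assume r: "r \<in> ?L"
      have h: "(\<Sum>y\<in>UNIV. if up y r = UNIV - UNIV then 1 else 0 :: real) = 1"
        using K1top[OF r] by (simp only: Diff_cancel)
      show "(\<Sum>x\<in>UNIV. if up x r = UNIV - UNIV then 1 else 0) * \<nu> r = \<nu> r" unfolding h by simp
    qed
    finally show "(\<Sum>x\<in>UNIV. \<Sum>y\<in>UNIV. q x y UNIV UNIV) = 1" using nu1 by simp
  qed
  show ?thesis using ca cb cc cd ce by blast
qed


lemma if_mult_eq: "(if P then 1 else 0) * (a::real) = (if P then a else 0)" by simp

lemma two_to_one:
  fixes Xlim :: "('a::finite set \<times> 'a set) set"
    and p :: "'a \<Rightarrow> 'a \<Rightarrow> 'a set \<Rightarrow> 'a set \<Rightarrow> real"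
    and q :: "'a \<Rightarrow> 'a \<Rightarrow> 'a set \<Rightarrow> 'a set \<Rightarrow> real"
  assumes a: "cond_a Xlim p q" and b: "cond_b q" and c: "cond_c q" and d: "cond_d q" and e: "eq_e q"
  shows "cdru_rep Xlim p"
proof -
  let ?L = "linorders :: ('a \<times> 'a) set set"
  have nnQ: "\<And>x A. x \<in> A \<Longrightarrow> 0 \<le> QQ q x A"
    unfolding QQ_def using c by (intro sum_nonneg) (auto simp: cond_c_def nesets_def)
  have consQ: "\<And>C. C \<noteq> {} \<Longrightarrow> C \<noteq> UNIV \<Longrightarrow> Gf (QQ q) C = (\<Sum>z\<in>UNIV - C. QQ q z (insert z C))"
    using d unfolding cond_d_def eq_d_def Gf_def QQ_def nesets_def by auto
  have nnq: "\<And>y B. y \<in> B \<Longrightarrow> 0 \<le> q x y A B" if "x \<in> A" for x A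
    using c that unfolding cond_c_def nesets_def by blast
  have consq: "\<And>C. C \<noteq> {} \<Longrightarrow> C \<noteq> UNIV \<Longrightarrow> Gf (\<lambda>y B. q x y A B) C = (\<Sum>z\<in>UNIV - C. q x z A (insert z C))"
    if "x \<in> A" for x A
    using b that unfolding cond_b_def Gf_def nesets_def by auto
  have GfU: "Gf (\<lambda>y B. q x y A B) UNIV = QQ q x A" for x A
    unfolding Gf_def QQ_def ..
  define \<nu> where "\<nu> = flowdist (QQ q)"
  define T where "T x A r' = (if 0 < QQ q x A then flowdist (\<lambda>y B. q x y A B) r' / QQ q x A
                             else (if r' \<in> ?L then 1 / real (card ?L) else 0))" for x A r'
  define t where "t x r r' = T x (UNIV - up x r) r'" for x r r'
  have nu1: "(\<Sum>r\<in>?L. \<nu> r) = 1"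
    unfolding \<nu>_def flow_total using e unfolding eq_e_def Gf_def QQ_def by simp
  have nud: "is_dist \<nu>"
    unfolding is_dist_def using nu1 flowdist_nonneg[OF nnQ] flowdist_zero unfolding \<nu>_def by auto
  have Lne: "card ?L > 0"
  proof -
    have "?L \<noteq> {}" using nu1 by auto
    then show ?thesis using finite_lin by (simp add: card_gt_0_iff)
  qed
  have Td: "is_dist (T x A)" if x: "x \<in> A" for x A
  proof (cases "0 < QQ q x A")
    case True
    have "(\<Sum>r\<in>?L. T x A r) = (\<Sum>r\<in>?L. flowdist (\<lambda>y B. q x y A B) r) / QQ q x A"
      unfolding T_def using True by (simp add: sum_divide_distrib)
    also have "\<dots> = 1" using True by (simp add: flow_total GfU)
    moreover have fn: "0 \<le> flowdist (\<lambda>y B. q x y A B) r" for r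
      by (rule flowdist_nonneg) (rule nnq[OF x])
    ultimately show ?thesis unfolding is_dist_def T_def
      using True flowdist_zero by auto
  next
    case False
    have "(\<Sum>r\<in>?L. T x A r) = (\<Sum>r\<in>?L. 1 / real (card ?L))"
      unfolding T_def using False by simp
    also have "\<dots> = 1" using Lne by (simp add: card_gt_0_iff)
    finally show ?thesis unfolding is_dist_def T_def using False by auto
  qed
  have td: "\<forall>x. \<forall>r\<in>?L. is_dist (t x r)"
  proof (intro allI ballI)
    fix x r assume r: "r \<in> ?L"
    have "x \<in> UNIV - up x r" using lin_irrefl[OF r] by (simp add: up_def)
    then show "is_dist (t x r)" unfolding t_def using Td by (simp add: fun_eq_iff[symmetric])
  qed
  have margT: "QQ q x A' * (\<Sum>r'\<in>?L. if up y r' = UNIV - B' then T x A' r' else 0) = q x y A' B'"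
    if x: "x \<in> A'" and y: "y \<in> B'" for x y A' B'
  proof (cases "0 < QQ q x A'")
    case True
    have "(\<Sum>r'\<in>?L. if up y r' = UNIV - B' then T x A' r' else 0)
        = (\<Sum>r'\<in>?L. if up y r' = UNIV - B' then flowdist (\<lambda>y B. q x y A' B) r' else 0) / QQ q x A'"
      unfolding T_def sum_divide_distrib using True by (intro sum.cong refl) auto
    also have "\<dots> = q x y A' B' / QQ q x A'"
      using flow_marg[OF nnq[OF x] consq[OF x] y] by simp
    finally show ?thesis using True by simp
  next
    case False
    then have Q0: "QQ q x A' = 0" using nnQ[OF x] by simp
    have "\<forall>r'\<in>?L. flowdist (\<lambda>y B. q x y A' B) r' = 0"
    proof -
      have "(\<Sum>r'\<in>?L. flowdist (\<lambda>y B. q x y A' B) r') = 0" using Q0 by (simp add: flow_total GfU)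
      moreover have fn: "0 \<le> flowdist (\<lambda>y B. q x y A' B) r" for r
        by (rule flowdist_nonneg) (rule nnq[OF x])
      ultimately show ?thesis using sum_nonneg_eq_0_iff[OF finite_lin] by blast
    qed
    then have "(\<Sum>r\<in>?L. if up y r = UNIV - B' then flowdist (\<lambda>y B. q x y A' B) r else 0) = 0"
      by (intro sum.neutral) auto
    then have "q x y A' B' = 0"
      using flow_marg[OF nnq[OF x] consq[OF x] y] by simp
    then show ?thesis using Q0 by simp
  qed
  have margnu: "(\<Sum>r\<in>?L. if up x r = UNIV - A' then \<nu> r else 0) = QQ q x A'" if x: "x \<in> A'" for x A'
    unfolding \<nu>_def by (rule flow_marg[OF nnQ consQ x])
  have termq: "(\<Sum>r\<in>?L. \<Sum>r'\<in>?L. (if up x r = UNIV - A' then 1 else 0) * (if up y r' = UNIV - B' then 1 else 0)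
                 * (\<nu> r * t x r r')) = q x y A' B'"
    if x: "x \<in> A'" and y: "y \<in> B'" for x y A' B'
  proof -
    have "(\<Sum>r\<in>?L. \<Sum>r'\<in>?L. (if up x r = UNIV - A' then 1 else 0) * (if up y r' = UNIV - B' then 1 else 0)
                 * (\<nu> r * t x r r'))
        = (\<Sum>r\<in>?L. \<Sum>r'\<in>?L. (if up x r = UNIV - A' then \<nu> r else 0) * (if up y r' = UNIV - B' then T x A' r' else 0))"
    proof (rule sum.cong[OF refl], rule sum.cong[OF refl])
      fix r r'
      show "(if up x r = UNIV - A' then 1 else 0) * (if up y r' = UNIV - B' then 1 else 0) * (\<nu> r * t x r r')
          = (if up x r = UNIV - A' then \<nu> r else 0) * (if up y r' = UNIV - B' then T x A' r' else 0)"
      proof (cases "up x r = UNIV - A'")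
        case True
        then have "UNIV - up x r = A'" by auto
        then show ?thesis using True unfolding t_def by simp
      qed simp
    qed
    also have "\<dots> = (\<Sum>r\<in>?L. if up x r = UNIV - A' then \<nu> r else 0) * (\<Sum>r'\<in>?L. if up y r' = UNIV - B' then T x A' r' else 0)"
      by (rule sum_product[symmetric])
    also have "\<dots> = q x y A' B'" using margnu[OF x] margT[OF x y] by simp
    finally show ?thesis .
  qed
  have rep: "\<forall>(A, B)\<in>Xlim. \<forall>x\<in>A. \<forall>y\<in>B. p x y A B = (\<Sum>r\<in>Nset x A. \<Sum>r'\<in>Nset y B. \<nu> r * t x r r')"
  proof (intro ballI, clarify)
    fix A B x y assume AB: "(A, B) \<in> Xlim" and x: "x \<in> A" and y: "y \<in> B"
    have "p x y A B = (\<Sum>A'\<in>{A'. A \<subseteq> A'}. \<Sum>B'\<in>{B'. B \<subseteq> B'}. q x y A' B')"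
      using a AB x y unfolding cond_a_def by auto
    also have "\<dots> = (\<Sum>A'\<in>{A'. A \<subseteq> A'}. \<Sum>B'\<in>{B'. B \<subseteq> B'}. \<Sum>r\<in>?L. \<Sum>r'\<in>?L.
            (if up x r = UNIV - A' then 1 else 0) * (if up y r' = UNIV - B' then 1 else 0) * (\<nu> r * t x r r'))"
    proof (rule sum.cong[OF refl], rule sum.cong[OF refl])
      fix A' B' assume "A' \<in> {A'. A \<subseteq> A'}" "B' \<in> {B'. B \<subseteq> B'}"
      then have "x \<in> A'" "y \<in> B'" using x y by auto
      then show "q x y A' B' = (\<Sum>r\<in>?L. \<Sum>r'\<in>?L.
            (if up x r = UNIV - A' then 1 else 0) * (if up y r' = UNIV - B' then 1 else 0) * (\<nu> r * t x r r'))"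
        using termq by simp
    qed
    also have "\<dots> = (\<Sum>r\<in>Nset x A. \<Sum>r'\<in>Nset y B. \<nu> r * t x r r')"
      by (rule rep_sum[OF x y])
    finally show "p x y A B = (\<Sum>r\<in>Nset x A. \<Sum>r'\<in>Nset y B. \<nu> r * t x r r')" .
  qed
  show ?thesis unfolding cdru_rep_def using nud td rep by blast
qed


theorem theorem8:
  fixes Xlim :: "('a::finite set \<times> 'a set) set"
    and p :: "'a \<Rightarrow> 'a \<Rightarrow> 'a set \<Rightarrow> 'a set \<Rightarrow> real"
  assumes "Xlim \<subseteq> nesets \<times> nesets"
    and "rjcr Xlim p"
  shows "(cdru_rep Xlim p \<longleftrightarrow>
            (\<exists>q. cond_a Xlim p q \<and> cond_b q \<and> cond_c q \<and> cond_d q \<and> eq_e q))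
       \<and> ((\<exists>q. cond_a Xlim p q \<and> cond_b q \<and> cond_c q \<and> cond_d q \<and> eq_e q) \<longleftrightarrow>
            (\<exists>q. cond_a Xlim p q \<and> cond_b q \<and> cond_c q \<and> cond_d' Xlim q \<and> cond_e' Xlim q))"
proof (intro conjI iffI)
  assume "cdru_rep Xlim p"
  then show "\<exists>q. cond_a Xlim p q \<and> cond_b q \<and> cond_c q \<and> cond_d q \<and> eq_e q"
    by (rule one_to_two)
next
  assume "\<exists>q. cond_a Xlim p q \<and> cond_b q \<and> cond_c q \<and> cond_d q \<and> eq_e q"
  then show "cdru_rep Xlim p" using two_to_one by blast
next
  assume "\<exists>q. cond_a Xlim p q \<and> cond_b q \<and> cond_c q \<and> cond_d q \<and> eq_e q"
  then obtain q where q: "cond_a Xlim p q" "cond_b q" "cond_c q" "cond_d q" "eq_e q" by blast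
  have "cond_d' Xlim q" using q(4) unfolding cond_d_def cond_d'_def by blast
  moreover have "cond_e' Xlim q" using q(5) unfolding cond_e'_def by blast
  ultimately show "\<exists>q. cond_a Xlim p q \<and> cond_b q \<and> cond_c q \<and> cond_d' Xlim q \<and> cond_e' Xlim q"
    using q by blast
next
  assume "\<exists>q. cond_a Xlim p q \<and> cond_b q \<and> cond_c q \<and> cond_d' Xlim q \<and> cond_e' Xlim q"
  then obtain q where q: "cond_a Xlim p q" "cond_b q" "cond_c q" "cond_d' Xlim q" "cond_e' Xlim q" by blast
  have "cond_d q \<and> eq_e q" by (rule three_to_two[OF assms q(1,2,4,5)])
  then show "\<exists>q. cond_a Xlim p q \<and> cond_b q \<and> cond_c q \<and> cond_d q \<and> eq_e q" using q by blast
qed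

end
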